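(* Let $\ell,n$ be positive integers with $2^\ell\le n$. If $A\subseteq\mathbb{Z}_{2^n}$ satisfies $|A|>(1-2^{-\ell})2^n$, then there exist $x,y\in\mathbb{Z}_{2^n}$ such that $\Sigma^*\{\underbrace{x,\dots,x}_{2^\ell-1},y\}\subseteq A$.
   Context: For a multiset $S=\{a_1,\dots,a_d\}$ of (not necessarily distinct) elements of $\mathbb{Z}_{2^n}$, $\Sigma^*S=\{\sum_{i\in I}a_i \bmod 2^n:\emptyset\ne I\subseteq[d]\}$. Thus $\Sigma^*\{x,\dots,x,y\}$ (with $2^\ell-1$ copies of $x$) equals $\{jx: 1\le j\le 2^\ell-1\}\cup\{y+jx: 0\le j\le 2^\ell-1\}$. *)

theory Defs
  imports Complex_Main
begin

text \<open>Elements of Z_(2^n) are represented by naturals in {..<2^n}.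
  A multiset S = {a_1,...,a_d} is represented by the list [a_1,...,a_d] (order irrelevant).
  sigma_star m xs is the set of all sums over nonempty index sets I of the entries, reduced mod m.\<close>

definition sigma_star :: "nat \<Rightarrow> nat list \<Rightarrow> nat set" where
  "sigma_star m xs = {(\<Sum>i\<in>I. xs ! i) mod m | I. I \<subseteq> {..<length xs} \<and> I \<noteq> {}}"

end

theory Submission
  imports Defs "HOL-Number_Theory.Cong"
begin

lemma exists_val:
  fixes b :: nat
  assumes "b > 0"
  shows "\<exists>v. 2^v dvd b \<and> \<not> 2^Suc v dvd b"
  using assms
proof (induction b rule: less_induct)
  case (less b)
  show ?case
  proof (cases "odd b")
    case True
    then show ?thesis by (intro exI[of _ 0]) auto
  next
    case False
    then obtain c where c: "b = 2*c" by blast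
    with less.prems have "c > 0" "c < b" by auto
    with less.IH obtain v where "2^v dvd c" "\<not> 2^Suc v dvd c" by blast
    then have "2^Suc v dvd b" "\<not> 2^Suc (Suc v) dvd b" using c by auto
    then show ?thesis by blast
  qed
qed

lemma count_b:
  fixes l n b :: nat
  assumes "b < 2^n" "l > 0" "l \<le> n"
  shows "card {(j,x). j \<in> {1..<2^l} \<and> x < 2^n \<and> odd x \<and> (j*x) mod 2^n = b} \<le> 2^(l-1)"
proof -
  define S where "S = {(j,x). j \<in> {1..<(2::nat)^l} \<and> x < (2::nat)^n \<and> odd x \<and> (j*x) mod 2^n = b}"
  show ?thesis
  proof (cases "S = {}")
    case True
    then show ?thesis unfolding S_def[symmetric] by simp
  next
    case False
    have bnz: "b > 0"
    proof (rule ccontr)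
      assume "\<not> b > 0"
      then have b0: "b = 0" by simp
      from False obtain j x where jx: "(j,x) \<in> S" by auto
      then have "2^n dvd j*x" "odd x" "j \<ge> 1" "j < 2^l" using b0 unfolding S_def by auto
      moreover have "coprime ((2::nat)^n) x" using \<open>odd x\<close> by simp
      ultimately have "2^n dvd j" using coprime_dvd_mult_left_iff by blast
      then have "2^n \<le> j" using \<open>j \<ge> 1\<close> by (simp add: dvd_imp_le)
      moreover have "(2::nat)^l \<le> 2^n" using assms(3) by (simp add: power_increasing)
      ultimately show False using \<open>j < 2^l\<close> by linarith
    qed
    obtain v where v: "2^v dvd b" "\<not> 2^Suc v dvd b" using exists_val[OF bnz] by blast
    have vn: "v < n"
    proof -
      have "2^v \<le> b" using v(1) bnz by (simp add: dvd_imp_le)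
      then have "(2::nat)^v < 2^n" using assms(1) by linarith
      then show ?thesis by simp
    qed
    have key: "2^v dvd j \<and> \<not> 2^Suc v dvd j" if "(j,x) \<in> S" for j x
    proof -
      from that have jx: "j*x = b + 2^n * (j*x div 2^n)" "odd x"
        unfolding S_def by auto
      have "(2::nat)^v dvd 2^n" using vn by (simp add: le_imp_power_dvd)
      then have "2^v dvd j*x" using jx(1) v(1) by (metis dvd_add dvd_mult2)
      moreover have "coprime ((2::nat)^v) x" using jx(2) by simp
      ultimately have d1: "2^v dvd j" using coprime_dvd_mult_left_iff by blast
      have "\<not> 2^Suc v dvd j"
      proof
        assume "2^Suc v dvd j"
        then have "2^Suc v dvd j*x" by simp
        moreover have "(2::nat)^Suc v dvd 2^n * (j*x div 2^n)"
          using vn le_imp_power_dvd[of "Suc v" n "2::nat"] by (intro dvd_mult2) simp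
        ultimately have "2^Suc v dvd b" using jx(1) by (metis dvd_add_right_iff add.commute)
        with v(2) show False by simp
      qed
      with d1 show ?thesis by blast
    qed
    have vl: "v < l"
    proof -
      from False obtain j x where jx: "(j,x) \<in> S" by auto
      then have "2^v dvd j" "j \<ge> 1" "j < 2^l" using key unfolding S_def by auto
      then have "(2::nat)^v < 2^l" by (meson dvd_imp_le le_less_trans less_le_trans zero_less_one)
      then show ?thesis by simp
    qed
    define f where "f = (\<lambda>(j::nat,x::nat). (j div 2^Suc v, x div 2^(n-v)))"
    have img: "f ` S \<subseteq> {..<2^(l - Suc v)} \<times> {..<2^v}"
    proof
      fix p assume "p \<in> f ` S"
      then obtain j x where jx: "(j,x) \<in> S" and p: "p = f (j,x)" by auto
      have "(2::nat)^Suc v * 2^(l - Suc v) = 2^l" using vl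
        by (metis power_add le_add_diff_inverse Suc_leI)
      then have "j < 2^Suc v * 2^(l - Suc v)" using jx unfolding S_def by simp
      then have a: "j div 2^Suc v < 2^(l - Suc v)" by (simp add: less_mult_imp_div_less mult.commute)
      have "(2::nat)^v * 2^(n-v) = 2^n" using vn
        by (metis power_add le_add_diff_inverse less_imp_le)
      then have "x < 2^v * 2^(n-v)" using jx unfolding S_def by simp
      then have b: "x div 2^(n-v) < 2^v" by (simp add: less_mult_imp_div_less)
      show "p \<in> {..<2^(l - Suc v)} \<times> {..<2^v}" using a b p unfolding f_def by simp
    qed
    have inj: "inj_on f S"
    proof (rule inj_onI)
      fix p q assume p: "p \<in> S" and q: "q \<in> S" and fpq: "f p = f q"
      obtain j x where pj: "p = (j,x)" by (cases p)
      obtain j' x' where qj: "q = (j',x')" by (cases q)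
      have obt: "\<exists>c. j = 2^v * c \<and> odd c" if "2^v dvd j" "\<not> 2^Suc v dvd j" for j :: nat
      proof -
        from that(1) obtain c where "j = 2^v * c" by (auto simp: dvd_def)
        moreover have "odd c" using that(2) \<open>j = 2^v * c\<close> by auto
        ultimately show ?thesis by blast
      qed
      from key[of j x] p pj obt obtain c where c: "j = 2^v * c" "odd c" by blast
      from key[of j' x'] q qj obt obtain c' where c': "j' = 2^v * c'" "odd c'" by blast
      have e1: "j div 2^Suc v = j' div 2^Suc v" "x div 2^(n-v) = x' div 2^(n-v)"
        using fpq pj qj unfolding f_def by auto
      have dm: "(2^v * a) div (2::nat)^Suc v = a div 2" for a
      proof -
        have "(2^v * a) div (2::nat)^Suc v = (2^v * a) div (2^v * 2)" by (simp add: mult.commute)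
        also have "\<dots> = a div 2" by (rule div_mult_mult1) simp
        finally show ?thesis .
      qed
      have "j div 2^Suc v = c div 2" using c(1) dm by simp
      moreover have "j' div 2^Suc v = c' div 2" using c'(1) dm by simp
      ultimately have "c div 2 = c' div 2" using e1 by simp
      then have "c = c'" using c(2) c'(2) by (metis odd_two_times_div_two_succ)
      then have jj: "j = j'" using c c' by simp
      have "j*x mod 2^n = j*x' mod 2^n" using p q pj qj jj unfolding S_def by auto
      moreover have "(2::nat)^n = 2^v * 2^(n-v)" using vn
        by (metis power_add le_add_diff_inverse less_imp_le)
      ultimately have "(2^v * (c*x)) mod (2^v * 2^(n-v)) = (2^v * (c*x')) mod (2^v * 2^(n-v))"
        using c(1) by (simp add: mult.assoc)
      then have "(c*x) mod 2^(n-v) = (c*x') mod 2^(n-v)" by (simp only: mod_mult_mult1) simp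
      then have "[c*x = c*x'] (mod 2^(n-v))" by (simp add: cong_def)
      moreover have "coprime c (2^(n-v))" using c(2) by simp
      ultimately have "[x = x'] (mod 2^(n-v))" using cong_mult_lcancel_nat by blast
      then have "x mod 2^(n-v) = x' mod 2^(n-v)" by (simp add: cong_def)
      with e1(2) have "x = x'" by (metis div_mult_mod_eq)
      then show "p = q" using pj qj jj by simp
    qed
    have "card S \<le> card ({..<(2::nat)^(l - Suc v)} \<times> {..<(2::nat)^v})"
      using card_inj_on_le[OF inj img] by simp
    also have "\<dots> = 2^(l - Suc v) * 2^v" by simp
    also have "\<dots> = 2^(l - Suc v + v)" by (simp add: power_add)
    also have "\<dots> = 2^(l-1)" using vl by simp
    finally show ?thesis unfolding S_def by simp
  qed
qed

lemma card_odds: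
  fixes n :: nat
  assumes "n > 0"
  shows "card {x. x < (2::nat)^n \<and> odd x} = 2^(n-1)"
proof -
  obtain m where m: "n = Suc m" using assms gr0_implies_Suc by blast
  have e: "(2::nat)^n = 2 * 2^m" using m by simp
  have eq: "{x. x < (2::nat)^n \<and> odd x} = (\<lambda>k. 2*k+1) ` {..<2^m}"
  proof (intro set_eqI iffI)
    fix x assume x: "x \<in> {x. x < (2::nat)^n \<and> odd x}"
    then have "x = 2 * (x div 2) + 1" by simp
    moreover have "x div 2 < 2^m" using x e by (simp add: less_mult_imp_div_less mult.commute)
    ultimately show "x \<in> (\<lambda>k. 2*k+1) ` {..<2^m}" by blast
  next
    fix x assume "x \<in> (\<lambda>k. 2*k+1) ` {..<(2::nat)^m}"
    then obtain k where "x = 2*k+1" "k < 2^m" by blast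
    then show "x \<in> {x. x < (2::nat)^n \<and> odd x}" using e by simp
  qed
  have "inj_on (\<lambda>k::nat. 2*k+1) {..<2^m}" by (auto simp: inj_on_def)
  then show ?thesis unfolding eq using m by (simp add: card_image)
qed

lemma step1:
  fixes l n :: nat and B :: "nat set"
  assumes "l > 0" "l \<le> n" "B \<subseteq> {..<2^n}" "2^l * card B < 2^n"
  shows "\<exists>x<2^n. odd x \<and> (\<forall>j\<in>{1..<2^l}. (j*x) mod 2^n \<notin> B)"
proof (rule ccontr)
  assume H: "\<not> ?thesis"
  have n0: "n > 0" using assms by simp
  have fB: "finite B" using assms(3) finite_subset by blast
  define S where "S = (\<lambda>b. {(j,x). j \<in> {1..<(2::nat)^l} \<and> x < (2::nat)^n \<and> odd x \<and> (j*x) mod 2^n = b})"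
  have sub: "{x. x < (2::nat)^n \<and> odd x} \<subseteq> snd ` (\<Union>b\<in>B. S b)"
  proof
    fix x assume "x \<in> {x. x < (2::nat)^n \<and> odd x}"
    with H obtain j where j: "j \<in> {1..<2^l}" "(j*x) mod 2^n \<in> B" "x < 2^n" "odd x" by auto
    then have "(j,x) \<in> S ((j*x) mod 2^n)" unfolding S_def by simp
    then have "(j,x) \<in> (\<Union>b\<in>B. S b)" using j(2) by blast
    then show "x \<in> snd ` (\<Union>b\<in>B. S b)" by force
  qed
  have finS: "finite (S b)" for b
  proof -
    have "S b \<subseteq> {..<2^l} \<times> {..<2^n}" unfolding S_def by auto
    then show ?thesis using finite_subset by blast
  qed
  have cb: "card (S b) \<le> 2^(l-1)" if "b \<in> B" for b
  proof -
    have "b < 2^n" using that assms(3) by auto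
    then show ?thesis unfolding S_def using count_b assms(1,2) by blast
  qed
  have "2^(n-1) = card {x. x < (2::nat)^n \<and> odd x}" using card_odds[OF n0] by simp
  also have "\<dots> \<le> card (snd ` (\<Union>b\<in>B. S b))"
    using sub fB finS by (intro card_mono) auto
  also have "\<dots> \<le> card (\<Union>b\<in>B. S b)" by (rule card_image_le) (use fB finS in auto)
  also have "\<dots> \<le> (\<Sum>b\<in>B. card (S b))" by (rule card_UN_le[OF fB])
  also have "\<dots> \<le> (\<Sum>b\<in>B. 2^(l-1))" using cb by (rule sum_mono)
  also have "\<dots> = card B * 2^(l-1)" by simp
  finally have le: "2^(n-1) \<le> card B * 2^(l-1)" .
  obtain m where m: "n = Suc m" using n0 gr0_implies_Suc by blast
  obtain k where k: "l = Suc k" using assms(1) gr0_implies_Suc by blast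
  have "2^m \<le> card B * 2^k" using le m k by simp
  then have "2 * 2^m \<le> 2 * (card B * 2^k)" by simp
  then show False using assms(4) m k by (simp add: mult.commute mult.left_commute)
qed

lemma step2:
  fixes L N x :: nat and B :: "nat set"
  assumes "finite B" "L * card B < N"
  shows "\<exists>y<N. \<forall>j<L. (y + j*x) mod N \<notin> B"
proof (rule ccontr)
  assume H: "\<not> ?thesis"
  define g where "g = (\<lambda>(j::nat, b::nat). nat ((int b - int (j*x)) mod int N))"
  have N0: "N > 0" using assms by linarith
  have sub: "{..<N} \<subseteq> g ` ({..<L} \<times> B)"
  proof
    fix y assume "y \<in> {..<N}"
    with H obtain j where j: "j < L" "(y + j*x) mod N \<in> B" by auto
    have "int ((y + j*x) mod N) = (int y + int (j*x)) mod int N" by (simp add: zmod_int)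
    then have "(int ((y + j*x) mod N) - int (j*x)) mod int N = (int y + int (j*x) - int (j*x)) mod int N"
      by (simp add: mod_diff_left_eq)
    also have "\<dots> = int y" using \<open>y \<in> {..<N}\<close> by simp
    finally have "y = g (j, (y + j*x) mod N)" unfolding g_def by simp
    then show "y \<in> g ` ({..<L} \<times> B)" using j by blast
  qed
  have "N \<le> card (g ` ({..<L} \<times> B))"
    using card_mono[OF _ sub] assms(1) by simp
  also have "\<dots> \<le> card ({..<L} \<times> B)" by (rule card_image_le) (use assms(1) in simp)
  also have "\<dots> = L * card B" by (simp add: card_cartesian_product)
  finally show False using assms(2) by linarith
qed

lemma sigma_part:
  fixes L N x y :: nat and A :: "nat set"
  assumes "L > 0"
    and h1: "\<forall>j\<in>{1..<L}. (j*x) mod N \<in> A"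
    and h2: "\<forall>j<L. (y + j*x) mod N \<in> A"
  shows "sigma_star N (replicate (L - 1) x @ [y]) \<subseteq> A"
proof
  fix z assume "z \<in> sigma_star N (replicate (L - 1) x @ [y])"
  then obtain I where I: "I \<subseteq> {..<L}" "I \<noteq> {}"
    and z: "z = (\<Sum>i\<in>I. (replicate (L - 1) x @ [y]) ! i) mod N"
    using assms(1) unfolding sigma_star_def by auto
  have fI: "finite I" using I(1) finite_subset by blast
  have nth: "(replicate (L - 1) x @ [y]) ! i = (if i = L - 1 then y else x)" if "i \<in> I" for i
    using that I(1) by (auto simp: nth_append)
  have sumI: "(\<Sum>i\<in>I. (replicate (L - 1) x @ [y]) ! i) = (\<Sum>i\<in>I. (if i = L - 1 then y else x))"
    using nth by (rule sum.cong[OF refl])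
  show "z \<in> A"
  proof (cases "L - 1 \<in> I")
    case True
    have "(\<Sum>i\<in>I. (if i = L - 1 then y else x)) = y + (\<Sum>i\<in>I - {L - 1}. (if i = L - 1 then y else x))"
      using sum.remove[OF fI True, of "\<lambda>i. if i = L - 1 then y else x"] by simp
    also have "(\<Sum>i\<in>I - {L - 1}. (if i = L - 1 then y else x)) = (\<Sum>i\<in>I - {L - 1}. x)"
      by (intro sum.cong) auto
    also have "\<dots> = card (I - {L - 1}) * x" by simp
    finally have s: "z = (y + card (I - {L - 1}) * x) mod N" using z sumI by simp
    have "I - {L - 1} \<subseteq> {..<L - 1}" using I(1) by auto
    then have "card (I - {L - 1}) \<le> card {..<L - 1}" by (intro card_mono) simp_all
    then have "card (I - {L - 1}) \<le> L - 1" by simp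
    then have "card (I - {L - 1}) < L" using assms(1) by linarith
    then show ?thesis using h2 s by blast
  next
    case False
    have "(\<Sum>i\<in>I. (if i = L - 1 then y else x)) = (\<Sum>i\<in>I. x)"
      using False by (intro sum.cong) auto
    also have "\<dots> = card I * x" by simp
    finally have s: "z = (card I * x) mod N" using z sumI by simp
    have "I \<subseteq> {..<L - 1}"
    proof
      fix i assume "i \<in> I"
      then have "i < L" "i \<noteq> L - 1" using I(1) False by auto
      then show "i \<in> {..<L - 1}" by simp
    qed
    then have "card I \<le> card {..<L - 1}" by (intro card_mono) simp_all
    then have "card I \<le> L - 1" by simp
    moreover have "card I \<ge> 1" using fI I(2) by (simp add: Suc_leI card_gt_0_iff)
    ultimately have "card I \<in> {1..<L}" using assms(1) by auto
    then show ?thesis using h1 s by blast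
  qed
qed

theorem theorem2p1:
  fixes l n :: nat and A :: "nat set"
  assumes "l > 0" and "n > 0" and "2 ^ l \<le> n"
    and "A \<subseteq> {..<2 ^ n}"
    and "real (card A) > (1 - 1 / 2 ^ l) * (2::real) ^ n"
  shows "\<exists>x y. x < 2 ^ n \<and> y < 2 ^ n \<and>
           sigma_star (2 ^ n) (replicate (2 ^ l - 1) x @ [y]) \<subseteq> A"
proof -
  have ln: "l \<le> n" using assms(3) less_imp_le[OF less_le_trans[OF less_exp[of l] assms(3)]] by simp
  define B where "B = {..<(2::nat)^n} - A"
  have Bsub: "B \<subseteq> {..<2^n}" unfolding B_def by auto
  have fB: "finite B" using Bsub finite_subset by blast
  have fA: "finite A" using assms(4) finite_subset by blast
  have cB: "card B = 2^n - card A" unfolding B_def using card_Diff_subset[OF fA assms(4)] by simp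
  have cAle: "card A \<le> 2^n" using card_mono[OF _ assms(4)] by simp
  have rB: "real (card B) = 2^n - real (card A)" using cB cAle by simp
  have pos: "(2::real)^l > 0" by simp
  have "(1 - 1 / 2 ^ l) * (2::real) ^ n = 2^n - 2^n / 2^l" by (simp add: algebra_simps)
  then have "real (card A) > 2^n - 2^n / 2^l" using assms(5) by simp
  then have "real (card B) < 2^n / 2^l" using rB by simp
  then have "2^l * real (card B) < 2^n" using pos by (simp add: field_simps)
  then have "real (2^l * card B) < real (2^n)" by simp
  then have key: "2^l * card B < 2^n" by (simp only: of_nat_less_iff)
  obtain x where x: "x < 2^n" "odd x" "\<forall>j\<in>{1..<2^l}. (j*x) mod 2^n \<notin> B"
    using step1[OF assms(1) ln Bsub key] by blast
  obtain y where y: "y < 2^n" "\<forall>j<2^l. (y + j*x) mod 2^n \<notin> B"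
    using step2[OF fB key] by blast
  have h1: "\<forall>j\<in>{1..<2^l}. (j*x) mod 2^n \<in> A" using x(3) unfolding B_def by auto
  have h2: "\<forall>j<2^l. (y + j*x) mod 2^n \<in> A" using y(2) unfolding B_def by auto
  have "sigma_star (2 ^ n) (replicate (2 ^ l - 1) x @ [y]) \<subseteq> A"
    by (rule sigma_part[OF _ h1 h2]) simp
  then show ?thesis using x(1) y(1) by blast
qed

end
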